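(* Let $k\ge1$, $m=2k$, and $R_m^+(\hat K)=P_m(\hat K)+\mathrm{span}\{\hat x^m\hat y,\ \hat x\hat y^m\}$. If $\hat v\in R_m^+(\hat K)$ vanishes at all points of $G^+\cup I^+\cup\{(1,1)\}$, then $\hat v\equiv 0$.
   Context: $\hat K=[-1,1]^2$; $P_n(\hat K)$ is the space of polynomials of total degree $\le n$. Let $g_{\pm1},\dots,g_{\pm k}$ be the $2k$ zeros of the Legendre polynomial of degree $2k$ on $[-1,1]$ ($g_{-i}=-g_i$). $G^+=\{(1,g_i),(-1,g_i),(g_i,1),(g_i,-1): i\in\{-k,\dots,k\}\setminus\{0\}\}$. $I^+$ is a set of $(2k-3)(k-1)$ interior points of $\hat K$ unisolvent for $P_{2k-4}(\hat K)$ (every polynomial in $P_{2k-4}(\hat K)$ is uniquely determined by its values on $I^+$); $I^+=\emptyset$ when $k=1$. *)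

theory Defs
  imports "HOL-Analysis.Analysis" "HOL-Computational_Algebra.Polynomial"
begin

fun legendre :: "nat \<Rightarrow> real poly" where
  "legendre 0 = 1"
| "legendre (Suc 0) = [:0, 1:]"
| "legendre (Suc (Suc n)) =
     smult (1 / real (n + 2))
       (smult (real (2 * n + 3)) ([:0, 1:] * legendre (Suc n)) - smult (real (n + 1)) (legendre n))"

definition P2 :: "nat \<Rightarrow> (real \<times> real \<Rightarrow> real) set" where
  "P2 n = {f. \<exists>c :: nat \<Rightarrow> nat \<Rightarrow> real.
              f = (\<lambda>(x, y). \<Sum>i\<le>n. \<Sum>j\<le>n - i. c i j * x ^ i * y ^ j)}"

definition Rplus :: "nat \<Rightarrow> (real \<times> real \<Rightarrow> real) set" where
  "Rplus m = {f. \<exists>p \<in> P2 m. \<exists>a b :: real.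
              f = (\<lambda>(x, y). p (x, y) + a * x ^ m * y + b * x * y ^ m)}"

definition gauss_pts :: "nat \<Rightarrow> real set" where
  "gauss_pts k = {g. poly (legendre (2 * k)) g = 0}"

definition Gplus :: "nat \<Rightarrow> (real \<times> real) set" where
  "Gplus k = (\<Union>g \<in> gauss_pts k. {(1, g), (-1, g), (g, 1), (g, -1)})"

definition admissible_I :: "nat \<Rightarrow> (real \<times> real) set \<Rightarrow> bool" where
  "admissible_I k I \<longleftrightarrow>
     (if k = 1 then I = {}
      else finite I \<and> card I = (2 * k - 3) * (k - 1)
         \<and> (\<forall>(x, y) \<in> I. -1 < x \<and> x < 1 \<and> -1 < y \<and> y < 1)
         \<and> (\<forall>p \<in> P2 (2 * k - 4). \<forall>q \<in> P2 (2 * k - 4).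
               (\<forall>z \<in> I. p z = q z) \<longrightarrow> p = q))"

end

theory Submission
  imports Defs
begin


lemma legendre_rec:
  "poly (legendre (Suc (Suc n))) t =
     (real (2*n+3) * t * poly (legendre (Suc n)) t - real (n+1) * poly (legendre n) t) / real (n+2)"
  by (simp add: field_simps)

lemma legendre_pm1:
  "poly (legendre n) 1 = 1 \<and> poly (legendre n) (-1) = (-1)^n"
proof (induction n rule: legendre.induct)
  case (3 n)
  then show ?case by (simp only: legendre_rec) (auto simp: field_simps)
qed auto

lemma legendre_lead:
  "coeff (legendre n) n > 0 \<and> (\<forall>j>n. coeff (legendre n) j = 0)"
proof (induction n rule: legendre.induct)
  case (3 n)
  have c: "coeff (legendre (Suc (Suc n))) j =
     (real (2*n+3) * (case j of 0 \<Rightarrow> 0 | Suc i \<Rightarrow> coeff (legendre (Suc n)) i)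
      - real (n+1) * coeff (legendre n) j) / real (n+2)" for j
    by (simp add: coeff_pCons field_simps split: nat.splits)
  have z: "coeff (legendre n) j = 0" if "j > n" for j
    using 3 that by blast
  show ?case
  proof
    show "coeff (legendre (Suc (Suc n))) (Suc (Suc n)) > 0"
      using 3 by (simp only: c) (simp add: z)
    show "\<forall>j>Suc (Suc n). coeff (legendre (Suc (Suc n))) j = 0"
      using 3 unfolding c by (auto simp: z split: nat.splits)
  qed
qed (auto simp: coeff_pCons split: nat.splits)



definition prl :: "(nat \<Rightarrow> real) \<Rightarrow> nat \<Rightarrow> real poly" where
  "prl r n = (\<Prod>i<n. [:- r i, 1:])"

lemma poly_prl: "poly (prl r n) y = (\<Prod>i<n. y - r i)"
  by (simp add: prl_def poly_prod)

lemma degree_prl: "degree (prl r n) = n"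
  unfolding prl_def by (subst degree_prod_eq_sum_degree) auto

lemma lead_prl: "coeff (prl r n) n = 1"
proof -
  have "lead_coeff (prl r n) = 1" unfolding prl_def lead_coeff_prod by simp
  then show ?thesis by (simp add: degree_prl)
qed

lemma prl_dvd:
  assumes "\<forall>i<n. \<forall>j<n. i \<noteq> j \<longrightarrow> r i \<noteq> r j" "\<forall>i<n. poly p (r i) = 0"
  shows "prl r n dvd p"
  using assms
proof (induction n arbitrary: p)
  case 0 then show ?case by (simp add: prl_def)
next
  case (Suc n)
  have "prl r n dvd p" using Suc by auto
  then obtain q where q: "p = prl r n * q" by (auto elim: dvdE)
  have "poly (prl r n) (r n) \<noteq> 0"
    using Suc.prems(1) by (auto simp: poly_prl)
  moreover have "poly p (r n) = 0" using Suc.prems(2) by auto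
  ultimately have "poly q (r n) = 0" using q by simp
  then have "[:- r n, 1:] dvd q" by (simp add: poly_eq_0_iff_dvd)
  then obtain q' where "q = [:- r n, 1:] * q'" by (auto elim: dvdE)
  then have "p = prl r (Suc n) * q'" using q unfolding prl_def by (simp only: prod.lessThan_Suc mult_ac)
  then show ?case by simp
qed

lemma prl_smult:
  assumes "degree p \<le> n" "prl r n dvd p"
  shows "\<exists>d. p = smult d (prl r n)"
proof -
  obtain q where q: "p = prl r n * q" using assms(2) by (auto elim: dvdE)
  show ?thesis
  proof (cases "q = 0")
    case True then show ?thesis using q by (intro exI[of _ 0]) simp
  next
    case False
    have "prl r n \<noteq> 0" using lead_prl[of r n] by auto
    then have "degree p = n + degree q" using q False by (simp add: degree_mult_eq degree_prl)
    then have "degree q = 0" using assms(1) by simp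
    then have "q = [:coeff q 0:]" using degree_0_id by metis
    then have "p = prl r n * [:coeff q 0:]" using q by simp
    then show ?thesis by (intro exI[of _ "coeff q 0"]) simp
  qed
qed

lemma prl_sign:
  fixes y :: real
  assumes "j \<le> n" "\<forall>i<j. r i < y" "\<forall>i. j \<le> i \<and> i < n \<longrightarrow> y < r i"
  shows "(-1)^(n-j) * (\<Prod>i<n. y - r i) > 0"
  using assms
proof (induction n arbitrary: j)
  case 0 then show ?case by simp
next
  case (Suc n)
  show ?case
  proof (cases "j \<le> n")
    case True
    then have "(-1)^(n-j) * (\<Prod>i<n. y - r i) > 0" using Suc by auto
    moreover have "y < r n" using Suc.prems True by auto
    moreover have "Suc n - j = Suc (n - j)" using True by simp
    ultimately show ?thesis by (simp add: mult_ac mult_neg_pos)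
  next
    case False
    then have j: "j = Suc n" using Suc by simp
    have "(-1)^(n-n) * (\<Prod>i<n. y - r i) > 0" using Suc.prems j by (intro Suc.IH) auto
    moreover have "y > r n" using Suc.prems j by auto
    ultimately show ?thesis using j by simp
  qed
qed



lemma degree_legendre: "degree (legendre n) = n"
  using legendre_lead[of n] by (metis degree_le le_antisym le_degree less_irrefl)

lemma sign_mul:
  fixes u a b :: real
  assumes "u * u = 1" "(-u) * a > 0" "u * b > 0"
  shows "a * b < 0"
proof -
  have "a * b = - (((-u) * a) * (u * b))"
    using assms(1) by (simp add: algebra_simps)
  then show ?thesis using mult_pos_pos[OF assms(2) assms(3)] by linarith
qed

lemma interlace:
  "\<exists>r c. (\<forall>i j. i < j \<longrightarrow> j < Suc m \<longrightarrow> r i < r j) \<and> (\<forall>i<Suc m. -1 < r i \<and> r i < 1)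
     \<and> c > 0 \<and> legendre (Suc m) = smult c (prl r (Suc m))
     \<and> (\<forall>i<Suc m. (-1)^(m-i) * poly (legendre m) (r i) > 0)"
proof (induction m)
  case 0
  show ?case
    by (rule exI[of _ "\<lambda>_. 0"], rule exI[of _ 1]) (simp add: prl_def)
next
  case (Suc m)
  define n where "n = Suc m"
  obtain r c where mono: "\<forall>i j. i < j \<longrightarrow> j < n \<longrightarrow> r i < r j"
    and rng: "\<forall>i<n. -1 < r i \<and> r i < 1" and c: "c > 0"
    and Ln: "legendre n = smult c (prl r n)"
    and sg: "\<forall>i<n. (-1)^(m-i) * poly (legendre m) (r i) > 0"
    using Suc.IH unfolding n_def by blast
  define L where "L = legendre (Suc n)"
  have rootn: "poly (legendre n) (r i) = 0" if "i < n" for i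
    using that by (auto simp: Ln poly_prl intro!: bexI[of _ i])
  have Lr: "(-1)^(n-i) * poly L (r i) > 0" if "i < n" for i
  proof -
    have "poly L (r i) = - (real (m+1) / real (m+2)) * poly (legendre m) (r i)"
      unfolding L_def n_def using legendre_rec[of m "r i"] rootn[OF that] by (simp add: n_def)
    moreover have "n - i = Suc (m - i)" using that n_def by simp
    ultimately have "(-1)^(n-i) * poly L (r i) = (real (m+1) / real (m+2)) * ((-1)^(m-i) * poly (legendre m) (r i))"
      by simp
    moreover have "real (m+1) / real (m+2) > 0" by simp
    ultimately show ?thesis using sg that by simp
  qed
  define e where "e t = (if t = 0 then -1 else if t = Suc n then 1 else r (t - 1))" for t
  have esg: "(-1)^(Suc n - t) * poly L (e t) > 0" if tle: "t \<le> Suc n" for t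
  proof -
    consider "t = 0" | "t = Suc n" | "0 < t \<and> t < Suc n" using tle by (auto simp: le_less)
    then show ?thesis
    proof cases
      case 1
      have "(-1::real)^(Suc n) * (-1)^(Suc n) = 1"
        by (metis power_mult_distrib mult_minus1 power_one minus_minus)
      then show ?thesis using 1 legendre_pm1[of "Suc n"] by (simp add: e_def L_def)
    next
      case 2
      then show ?thesis using legendre_pm1[of "Suc n"] by (simp add: e_def L_def)
    next
      case 3
      then have h: "e t = r (t - 1)" "Suc n - t = n - (t - 1)" "t - 1 < n" by (auto simp: e_def)
      have "(-1)^(n - (t - 1)) * poly L (r (t - 1)) > 0" by (rule Lr) (rule h(3))
      then show ?thesis by (simp only: h(1) h(2))
    qed
  qed
  have emono: "e a < e b" if ab: "a < b" "b \<le> Suc n" for a b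
  proof -
    consider "a = 0" "b = Suc n" | "a = 0" "0 < b" "b < Suc n" | "0 < a" "b = Suc n" | "0 < a" "b < Suc n"
      using ab by (auto simp: le_less)
    then show ?thesis
    proof cases
      case 1 then show ?thesis by (simp add: e_def)
    next
      case 2 then show ?thesis using rng[rule_format, of "b - 1"] by (simp add: e_def)
    next
      case 3 then show ?thesis using rng[rule_format, of "a - 1"] ab by (simp add: e_def)
    next
      case 4 then show ?thesis using mono[rule_format, of "a - 1" "b - 1"] ab by (simp add: e_def)
    qed
  qed
  have emono': "e a \<le> e b" if "a \<le> b" "b \<le> Suc n" for a b
    using emono[of a b] that by (cases "a = b") auto
  have "\<exists>s. e j < s \<and> s < e (Suc j) \<and> poly L s = 0" if "j \<le> n" for j
  proof -
    have "poly L (e j) * poly L (e (Suc j)) < 0"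
    proof (rule sign_mul[of "(-1)^(n-j)"])
      show "(-1::real)^(n-j) * (-1)^(n-j) = 1"
        by (metis power_mult_distrib mult_minus1 power_one minus_minus)
      have "Suc n - j = Suc (n - j)" using that by simp
      then show "(-((-1)^(n-j))) * poly L (e j) > 0" using esg[of j] that by simp
      show "(-1)^(n-j) * poly L (e (Suc j)) > 0" using esg[of "Suc j"] that by simp
    qed
    then show ?thesis using poly_IVT[OF emono[of j "Suc j"]] that by auto
  qed
  then obtain s where s: "\<forall>j\<le>n. e j < s j \<and> s j < e (Suc j) \<and> poly L (s j) = 0"
    by metis
  have smono: "s i < s j" if "i < j" "j < Suc n" for i j
  proof -
    have "s i < e (Suc i)" using s that by auto
    also have "e (Suc i) \<le> e j" using that by (intro emono') auto
    also have "e j < s j" using s that by auto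
    finally show ?thesis .
  qed
  have srng: "-1 < s i \<and> s i < 1" if "i < Suc n" for i
  proof -
    have "e 0 \<le> e i" "e (Suc i) \<le> e (Suc n)" using that by (auto intro: emono')
    then show ?thesis using s that by (auto simp: e_def split: if_splits)
  qed
  have "prl s (Suc n) dvd L"
  proof (rule prl_dvd)
    show "\<forall>i<Suc n. \<forall>j<Suc n. i \<noteq> j \<longrightarrow> s i \<noteq> s j"
      using smono by (metis less_irrefl neq_iff)
    show "\<forall>i<Suc n. poly L (s i) = 0" using s by (auto simp: less_Suc_eq_le)
  qed
  then obtain d where d: "L = smult d (prl s (Suc n))"
    using prl_smult[of L "Suc n" s] degree_legendre unfolding L_def by auto
  have "d > 0"
    using legendre_lead[of "Suc n"] lead_prl[of s "Suc n"] unfolding d[unfolded L_def] by simp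
  moreover have "(-1)^(n-j) * poly (legendre n) (s j) > 0" if "j < Suc n" for j
  proof -
    have "(-1)^(n-j) * (\<Prod>i<n. s j - r i) > 0"
    proof (rule prl_sign)
      show "j \<le> n" using that by simp
      show "\<forall>i<j. r i < s j"
      proof (intro allI impI)
        fix i assume "i < j"
        then have "r i = e (Suc i)" using that by (auto simp: e_def)
        moreover have "e (Suc i) \<le> e j" using that \<open>i < j\<close> by (intro emono') auto
        moreover have "e j < s j" using s that by simp
        ultimately show "r i < s j" by linarith
      qed
      show "\<forall>i. j \<le> i \<and> i < n \<longrightarrow> s j < r i"
      proof (intro allI impI)
        fix i assume "j \<le> i \<and> i < n"
        then have "r i = e (Suc i)" by (auto simp: e_def)
        moreover have "e (Suc j) \<le> e (Suc i)" using \<open>j \<le> i \<and> i < n\<close> by (intro emono') auto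
        moreover have "s j < e (Suc j)" using s that by simp
        ultimately show "s j < r i" by linarith
      qed
    qed
    then show ?thesis using c by (simp add: Ln poly_prl mult.left_commute)
  qed
  ultimately show ?case
    using smono srng d unfolding n_def L_def by (intro exI[of _ s] exI[of _ d]) auto
qed



definition ev2 :: "real poly poly \<Rightarrow> real \<Rightarrow> real \<Rightarrow> real" where
  "ev2 V x y = poly (poly V [:x:]) y"

lemma ev2_add[simp]: "ev2 (A + B) x y = ev2 A x y + ev2 B x y"
  by (simp add: ev2_def)
lemma ev2_mult[simp]: "ev2 (A * B) x y = ev2 A x y * ev2 B x y"
  by (simp add: ev2_def)
lemma ev2_sum: "ev2 (sum f S) x y = (\<Sum>i\<in>S. ev2 (f i) x y)"
  by (simp add: ev2_def poly_sum)
lemma ev2_monom[simp]: "ev2 (monom (monom c j) i) x y = c * x^i * y^j"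
  by (simp add: ev2_def poly_monom poly_const_pow)
lemma ev2_smult[simp]: "ev2 (smult q R) x y = poly q y * ev2 R x y"
  by (simp add: ev2_def)
lemma ev2_X2: "ev2 [:-1,0,1:] x y = x*x - 1"
  by (simp add: ev2_def)
lemma ev2_zero[simp]: "ev2 0 x y = 0"
  by (simp add: ev2_def)

lemma ev2_swap: "poly (map_poly (\<lambda>q. poly q y) V) x = ev2 V x y"
  unfolding ev2_def by (induction V rule: pCons_induct) (auto simp: map_poly_pCons)

lemma coeff_ev_outer: "coeff (poly V [:x:]) b = poly (map_poly (\<lambda>q. coeff q b) V) x"
  by (induction V rule: pCons_induct) (auto simp: map_poly_pCons)

lemma ev2_one: "ev2 V 1 y = poly (poly V 1) y"
  by (simp add: ev2_def one_pCons)
lemma ev2_mone: "ev2 V (-1) y = poly (poly V (-1)) y"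
  by (simp add: ev2_def one_pCons)

lemma deg_restr1:
  assumes "\<forall>a b. coeff (coeff V a) b \<noteq> 0 \<longrightarrow> b \<le> M"
  shows "degree (poly V [:x:]) \<le> M"
proof (rule degree_le, intro allI impI)
  fix b assume "M < b"
  then have "map_poly (\<lambda>q. coeff q b) V = 0"
    using assms \<open>M < b\<close> by (intro poly_eqI) (simp add: coeff_map_poly, meson not_le)
  then show "coeff (poly V [:x:]) b = 0" by (simp add: coeff_ev_outer)
qed

lemma deg_restr2:
  assumes "\<forall>a b. coeff (coeff V a) b \<noteq> 0 \<longrightarrow> a \<le> M"
  shows "degree (map_poly (\<lambda>q. poly q y) V) \<le> M"
proof (rule degree_le, intro allI impI)
  fix a assume "M < a"
  then have "coeff V a = 0"
    using assms by (intro poly_eqI) auto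
  then show "coeff (map_poly (\<lambda>q. poly q y) V) a = 0" by (simp add: coeff_map_poly)
qed

lemma two_roots:
  fixes p :: "'a::idom poly"
  assumes "(2::'a) \<noteq> 0" "poly p 1 = 0" "poly p (-1) = 0"
  shows "[:-1,0,1:] dvd p"
proof -
  obtain q1 where q1: "p = [:-1,1:] * q1"
    using assms(2) by (auto simp: poly_eq_0_iff_dvd elim: dvdE)
  have "poly p (-1) = -2 * poly q1 (-1)" by (simp add: q1)
  then have "poly q1 (-1) = 0" using assms by simp
  then obtain q where "q1 = [:1,1:] * q"
    by (auto simp: poly_eq_0_iff_dvd elim: dvdE)
  then have "p = [:-1,0,1:] * q" using q1 by (simp add: mult.assoc[symmetric])
  then show ?thesis by (intro dvdI)
qed

lemma coeff_X2_mult: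
  "coeff (([:-1,0,1:] :: 'a::comm_ring_1 poly) * p) (Suc (Suc n)) = coeff p n - coeff p (Suc (Suc n))"
  by (simp add: mult_pCons_left coeff_pCons)

lemma poly_sum_le:
  fixes p :: "real poly"
  assumes "degree p \<le> N"
  shows "poly p x = (\<Sum>i\<le>N. coeff p i * x^i)"
proof -
  have "poly p x = poly (\<Sum>i\<le>N. monom (coeff p i) i) x"
    using poly_as_sum_of_monoms'[OF assms] by simp
  then show ?thesis by (simp add: poly_sum poly_monom)
qed

lemma edge:
  fixes r :: "nat \<Rightarrow> real"
  assumes mono: "\<forall>i j. i < j \<longrightarrow> j < n \<longrightarrow> r i < r j"
    and rng: "\<forall>i<n. -1 < r i \<and> r i < 1"
    and deg: "degree f \<le> n" and z: "\<forall>i<n. poly f (r i) = 0"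
    and e: "poly f 1 = 0 \<or> poly f (-1) = 0"
  shows "f = 0"
proof -
  have "prl r n dvd f"
    by (rule prl_dvd) (use mono z in \<open>metis less_irrefl neq_iff\<close>)+
  then obtain d where d: "f = smult d (prl r n)" using prl_smult deg by blast
  have "poly (prl r n) 1 \<noteq> 0" "poly (prl r n) (-1) \<noteq> 0"
    using rng by (auto simp: poly_prl)
  then have "d = 0" using e by (auto simp: d)
  then show ?thesis by (simp add: d)
qed



lemma step_support:
  fixes c :: "nat \<Rightarrow> nat \<Rightarrow> real" and a b :: real and m :: nat
  assumes V_def: "V = (\<Sum>i\<le>m. \<Sum>j\<le>m-i. monom (monom (c i j) j) i) + monom (monom a 1) m + monom (monom b m) 1"
  shows "coeff (coeff V a') b' \<noteq> 0 \<longrightarrow> a' + b' \<le> m \<or> (a' = m \<and> b' = 1) \<or> (a' = 1 \<and> b' = m)"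
proof (intro impI, rule ccontr)
  assume ne: "coeff (coeff V a') b' \<noteq> 0" and h: "\<not> (a' + b' \<le> m \<or> (a' = m \<and> b' = 1) \<or> (a' = 1 \<and> b' = m))"
  have "coeff (coeff V a') b' = (\<Sum>i\<le>m. \<Sum>j\<le>m-i. coeff (coeff (monom (monom (c i j) j) i) a') b')"
    using h by (auto simp: V_def coeff_sum coeff_monom)
  also have "\<dots> = 0"
    using h by (intro sum.neutral ballI) (auto simp: coeff_monom)
  finally show False using ne by simp
qed



lemma ev2_as_sum:
  fixes Q :: "real poly poly"
  assumes "\<forall>i j. coeff (coeff Q i) j \<noteq> 0 \<longrightarrow> i + j \<le> nn"
  shows "ev2 Q x y = (\<Sum>i\<le>nn. \<Sum>j\<le>nn-i. coeff (coeff Q i) j * x^i * y^j)"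
proof -
  have "\<forall>a b. coeff (coeff Q a) b \<noteq> 0 \<longrightarrow> a \<le> nn" using assms by fastforce
  then have dg: "degree (map_poly (\<lambda>q. poly q y) Q) \<le> nn" by (rule deg_restr2)
  have dgi: "degree (coeff Q i) \<le> nn" for i
    using assms by (intro degree_le) (metis le_add2 le_trans not_le)
  have inner: "(\<Sum>j\<le>nn. coeff (coeff Q i) j * y^j) = (\<Sum>j\<le>nn-i. coeff (coeff Q i) j * y^j)" for i
  proof (rule sum.mono_neutral_right)
    show "\<forall>j\<in>{..nn} - {..nn - i}. coeff (coeff Q i) j * y ^ j = 0"
    proof
      fix j assume "j \<in> {..nn} - {..nn - i}"
      then have "\<not> i + j \<le> nn" by auto
      then show "coeff (coeff Q i) j * y ^ j = 0" using assms by (metis mult_zero_left)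
    qed
  qed auto
  have "ev2 Q x y = (\<Sum>i\<le>nn. poly (coeff Q i) y * x^i)"
    by (simp add: ev2_swap[symmetric] poly_sum_le[OF dg] coeff_map_poly)
  also have "\<dots> = (\<Sum>i\<le>nn. (\<Sum>j\<le>nn. coeff (coeff Q i) j * y^j) * x^i)"
    by (simp add: poly_sum_le[OF dgi])
  also have "\<dots> = (\<Sum>i\<le>nn. (\<Sum>j\<le>nn-i. coeff (coeff Q i) j * y^j) * x^i)"
    using inner by simp
  also have "\<dots> = (\<Sum>i\<le>nn. \<Sum>j\<le>nn-i. coeff (coeff Q i) j * x^i * y^j)"
    by (simp add: sum_distrib_right sum_distrib_left mult_ac)
  finally show ?thesis .
qed

theorem mainTheorem6:
  fixes k :: nat and I :: "(real \<times> real) set" and v :: "real \<times> real \<Rightarrow> real"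
  assumes "k \<ge> 1"
    and "admissible_I k I"
    and "v \<in> Rplus (2 * k)"
    and "\<forall>z \<in> Gplus k \<union> I \<union> {(1, 1)}. v z = 0"
  shows "v = (\<lambda>_. 0)"
proof -
  define m where "m = 2 * k"
  have m2: "m \<ge> 2" using assms(1) m_def by simp
  obtain p a b where pP: "p \<in> P2 m" and vdef: "v = (\<lambda>(x, y). p (x, y) + a * x ^ m * y + b * x * y ^ m)"
    using assms(3) unfolding Rplus_def m_def by blast
  obtain c where pdef: "p = (\<lambda>(x, y). \<Sum>i\<le>m. \<Sum>j\<le>m - i. c i j * x ^ i * y ^ j)"
    using pP unfolding P2_def by blast
  define V where "V = (\<Sum>i\<le>m. \<Sum>j\<le>m-i. monom (monom (c i j) j) i) + monom (monom a 1) m + monom (monom b m) 1"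
  have vV: "v (x, y) = ev2 V x y" for x y
    by (simp add: vdef pdef V_def ev2_sum mult_ac)
  have suppV: "coeff (coeff V a') b' \<noteq> 0 \<longrightarrow> a' + b' \<le> m \<or> (a' = m \<and> b' = 1) \<or> (a' = 1 \<and> b' = m)" for a' b'
    by (rule step_support[OF V_def])
  have suppA: "\<forall>a' b'. coeff (coeff V a') b' \<noteq> 0 \<longrightarrow> a' \<le> m" using suppV m2 by fastforce
  have suppB: "\<forall>a' b'. coeff (coeff V a') b' \<noteq> 0 \<longrightarrow> b' \<le> m" using suppV m2 by fastforce
  obtain r c0 where mono: "\<forall>i j. i < j \<longrightarrow> j < m \<longrightarrow> r i < r j"
    and rng: "\<forall>i<m. -1 < r i \<and> r i < 1" and Lm: "legendre m = smult c0 (prl r m)"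
    using interlace[of "m - 1"] m2 by auto
  have rG: "r i \<in> gauss_pts k" if "i < m" for i
    using that by (auto simp: gauss_pts_def m_def[symmetric] Lm poly_prl intro!: bexI[of _ i])
  have vz: "v z = 0" if "z \<in> Gplus k \<union> I \<union> {(1, 1)}" for z using assms(4) that by blast
  have inG: "(1, r i) \<in> Gplus k \<and> (-1, r i) \<in> Gplus k \<and> (r i, 1) \<in> Gplus k \<and> (r i, -1) \<in> Gplus k"
    if "i < m" for i
    using rG[OF that] unfolding Gplus_def by blast
  have G1: "v (1, r i) = 0" "v (-1, r i) = 0" "v (r i, 1) = 0" "v (r i, -1) = 0" if "i < m" for i
    using inG[OF that] vz by blast+
  have v11: "v (1, 1) = 0" by (rule vz) simp
  define fx1 where "fx1 = poly V 1"
  define fy1 where "fy1 = map_poly (\<lambda>q. poly q 1) V"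
  define fxm where "fxm = poly V (-1)"
  define fym where "fym = map_poly (\<lambda>q. poly q (-1)) V"
  have pfx1: "poly fx1 y = v (1, y)" for y by (simp add: fx1_def vV ev2_one)
  have pfxm: "poly fxm y = v (-1, y)" for y by (simp add: fxm_def vV ev2_mone)
  have pfy1: "poly fy1 x = v (x, 1)" for x by (simp add: fy1_def vV ev2_swap)
  have pfym: "poly fym x = v (x, -1)" for x by (simp add: fym_def vV ev2_swap)
  have dfx1: "degree fx1 \<le> m" unfolding fx1_def one_pCons by (rule deg_restr1[OF suppB])
  have dfxm: "degree fxm \<le> m" unfolding fxm_def
    using deg_restr1[OF suppB, of "-1"] by (simp add: one_pCons)
  have dfy1: "degree fy1 \<le> m" unfolding fy1_def by (rule deg_restr2[OF suppA])
  have dfym: "degree fym \<le> m" unfolding fym_def by (rule deg_restr2[OF suppA])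
  have fx1: "fx1 = 0"
    by (rule edge[OF mono rng dfx1]) (use G1 v11 pfx1 in auto)
  have fy1: "fy1 = 0"
    by (rule edge[OF mono rng dfy1]) (use G1 v11 pfy1 in auto)
  have fxm: "fxm = 0"
  proof (rule edge[OF mono rng dfxm])
    show "\<forall>i<m. poly fxm (r i) = 0" using G1 pfxm by auto
    have "v (-1, 1) = 0" using pfy1[of "-1"] fy1 by simp
    then show "poly fxm 1 = 0 \<or> poly fxm (-1) = 0" using pfxm by simp
  qed
  have fym: "fym = 0"
  proof (rule edge[OF mono rng dfym])
    show "\<forall>i<m. poly fym (r i) = 0" using G1 pfym by auto
    have "v (1, -1) = 0" using pfx1[of "-1"] fx1 by simp
    then show "poly fym 1 = 0 \<or> poly fym (-1) = 0" using pfym by simp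
  qed
  have "[:-1,0,1:] dvd V"
    by (rule two_roots) (use fx1 fxm in \<open>auto simp: fx1_def fxm_def\<close>)
  then obtain W where VW: "V = [:-1,0,1:] * W" by (auto elim: dvdE)
  define Y2 :: "real poly" where "Y2 = [:-1,0,1:]"
  have Wy: "poly (coeff W i) t = 0" if "t = 1 \<or> t = -1" for i t
  proof -
    define g where "g = map_poly (\<lambda>q. poly q t) W"
    have "poly (Y2 * g) x = 0" for x
    proof -
      have "poly (Y2 * g) x = ev2 V x t"
        by (simp only: VW ev2_mult ev2_X2) (simp add: g_def Y2_def ev2_swap algebra_simps)
      also have "\<dots> = 0" using that fy1 fym pfy1 pfym vV by auto
      finally show ?thesis .
    qed
    then have "Y2 * g = 0" using poly_all_0_iff_0 by blast
    moreover have "Y2 \<noteq> 0" by (simp add: Y2_def)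
    ultimately have "g = 0" by simp
    then have "coeff g i = 0" by simp
    then show ?thesis by (simp add: g_def coeff_map_poly)
  qed
  define Q where "Q = map_poly (\<lambda>q. q div Y2) W"
  have WQ: "W = smult Y2 Q"
  proof (rule poly_eqI)
    fix i
    have "Y2 dvd coeff W i" unfolding Y2_def by (rule two_roots) (use Wy in auto)
    then show "coeff W i = coeff (smult Y2 Q) i" by (simp add: Q_def coeff_map_poly)
  qed
  have vQ: "v (x, y) = (x*x - 1) * ((y*y - 1) * ev2 Q x y)" for x y
    by (simp only: vV VW WQ ev2_mult ev2_X2 ev2_smult) (simp add: Y2_def)
  define C where "C i j = coeff (coeff Q i) j" for i j
  have coeffV: "coeff (coeff V (Suc (Suc i))) (Suc (Suc j)) =
      C i j - C (Suc (Suc i)) j - C i (Suc (Suc j)) + C (Suc (Suc i)) (Suc (Suc j))" for i j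
  proof -
    have "coeff V (Suc (Suc i)) = Y2 * (coeff Q i - coeff Q (Suc (Suc i)))"
      by (simp add: VW WQ coeff_X2_mult algebra_simps)
    then show ?thesis by (simp add: Y2_def coeff_X2_mult C_def)
  qed
  have bound: "i + j + 4 \<le> m" if Cij: "C i j \<noteq> 0" for i j
  proof -
    define B where "B = degree Q + (\<Sum>i\<le>degree Q. degree (coeff Q i))"
    have Pb: "\<forall>s. (\<exists>i j. C i j \<noteq> 0 \<and> i + j = s) \<longrightarrow> s \<le> B"
    proof (intro allI impI)
      fix s assume "\<exists>i j. C i j \<noteq> 0 \<and> i + j = s"
      then obtain i j where ij: "C i j \<noteq> 0" "i + j = s" by blast
      then have "coeff Q i \<noteq> 0" by (auto simp: C_def)
      then have "i \<le> degree Q" using le_degree by blast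
      moreover have "j \<le> degree (coeff Q i)" using ij le_degree C_def by metis
      moreover have "degree (coeff Q i) \<le> (\<Sum>i\<le>degree Q. degree (coeff Q i))"
        using \<open>i \<le> degree Q\<close> by (intro member_le_sum) auto
      ultimately show "s \<le> B" using ij B_def by linarith
    qed
    obtain s0 where s0: "\<exists>i j. C i j \<noteq> 0 \<and> i + j = s0"
      and smax: "\<forall>s. (\<exists>i j. C i j \<noteq> 0 \<and> i + j = s) \<longrightarrow> s \<le> s0"
      using Nat.ex_has_greatest_nat[of "\<lambda>s. \<exists>i j. C i j \<noteq> 0 \<and> i + j = s" "i + j" B] Cij Pb by blast
    obtain i0 j0 where ij0: "C i0 j0 \<noteq> 0" "i0 + j0 = s0" using s0 by blast
    have z: "C i' j' = 0" if "i' + j' > s0" for i' j' using smax that by fastforce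
    have "coeff (coeff V (Suc (Suc i0))) (Suc (Suc j0)) = C i0 j0"
      unfolding coeffV using z ij0 by simp
    then have "coeff (coeff V (Suc (Suc i0))) (Suc (Suc j0)) \<noteq> 0" using ij0 by simp
    then have "Suc (Suc i0) + Suc (Suc j0) \<le> m \<or> (Suc (Suc i0) = m \<and> Suc (Suc j0) = 1) \<or> (Suc (Suc i0) = 1 \<and> Suc (Suc j0) = m)"
      using suppV by blast
    then have "Suc (Suc i0) + Suc (Suc j0) \<le> m" by simp
    moreover have "i + j \<le> s0" using smax Cij by blast
    ultimately show ?thesis using ij0 by linarith
  qed
  show ?thesis
  proof (cases "k = 1")
    case True
    then have "C i j = 0" for i j using bound m_def by fastforce
    then have "Q = 0" by (intro poly_eqI) (simp add: C_def poly_eq_iff)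
    then have ev0: "ev2 Q x y = 0" for x y by simp
    show ?thesis
    proof
      fix z :: "real \<times> real"
      obtain x y where "z = (x, y)" by force
      then show "v z = 0" using vQ[of x y] ev0[of x y] by simp
    qed
  next
    case False
    define nn where "nn = 2 * k - 4"
    have bd: "\<forall>i j. coeff (coeff Q i) j \<noteq> 0 \<longrightarrow> i + j \<le> nn"
      using bound unfolding C_def nn_def m_def by fastforce
    define q where "q = (\<lambda>(x::real, y::real). ev2 Q x y)"
    have qP: "q \<in> P2 nn"
      unfolding P2_def q_def by (rule CollectI, rule exI[of _ "\<lambda>i j. coeff (coeff Q i) j"])
        (simp add: ev2_as_sum[OF bd] fun_eq_iff)
    have zP: "(\<lambda>_. 0) \<in> P2 nn"
      unfolding P2_def by (rule CollectI, rule exI[of _ "\<lambda>i j. 0"]) (simp add: fun_eq_iff)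
    have admI: "finite I \<and> card I = (2 * k - 3) * (k - 1)
         \<and> (\<forall>(x, y) \<in> I. -1 < x \<and> x < 1 \<and> -1 < y \<and> y < 1)
         \<and> (\<forall>p \<in> P2 (2 * k - 4). \<forall>q \<in> P2 (2 * k - 4).
               (\<forall>z \<in> I. p z = q z) \<longrightarrow> p = q)"
      using assms(2) unfolding admissible_I_def if_not_P[OF False] .
    then have adm: "\<forall>p \<in> P2 nn. \<forall>q \<in> P2 nn. (\<forall>z \<in> I. p z = q z) \<longrightarrow> p = q"
      unfolding nn_def by (elim conjE)
    from admI have Iin: "\<forall>(x, y) \<in> I. -1 < x \<and> x < 1 \<and> -1 < y \<and> y < 1"
      by (elim conjE)
    have "\<forall>z \<in> I. q z = 0"
    proof
      fix z assume zI: "z \<in> I"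
      obtain x y where z: "z = (x, y)" by force
      have xyI: "(x, y) \<in> I" using zI z by simp
      have "-1 < x \<and> x < 1 \<and> -1 < y \<and> y < 1" using bspec[OF Iin xyI] by simp
      then have "(1 - x) * (1 + x) > 0" "(1 - y) * (1 + y) > 0" by (auto intro!: mult_pos_pos)
      then have "x*x - 1 \<noteq> 0" "y*y - 1 \<noteq> 0" by (auto simp: algebra_simps)
      moreover have "v (x, y) = 0" by (rule vz) (use xyI in blast)
      ultimately show "q z = 0" using vQ[of x y] by (simp add: q_def z)
    qed
    then have q0: "q = (\<lambda>_. 0)" using adm[rule_format, OF qP zP] by simp
    have ev0: "ev2 Q x y = 0" for x y using fun_cong[OF q0, of "(x, y)"] by (simp add: q_def)
    show ?thesis
    proof
      fix z :: "real \<times> real"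
      obtain x y where "z = (x, y)" by force
      then show "v z = 0" using vQ[of x y] ev0[of x y] by simp
    qed
  qed
qed

end
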